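(* Let $a$ be a positive integer and let $T_{a,a} = \{C_{i,1} : 1 \le i \le 2a+1\} \cup \{C_{a+1,j} : 2 \le j \le a+1\}$, of size $n = 3a+1$. Then on the $n \times n$ board, $\mathrm{cp}_{\mathrm{free}}(T_{a,a}) = 2$.
   Context: For integers $i,j$, $C_{i,j}$ denotes the unit square cell in column $i$ and row $j$ of the integer grid (columns numbered left to right, rows numbered top to bottom). A polyomino is a finite set of cells; its size is its number of cells. For a polyomino $\mathcal{P}$ of size $n$ the board is $\mathbb{B} = \{C_{i,j} : 1 \le i,j \le n\}$. The shift of $\mathcal{P}$ by integers $(c,d)$ is $\mathcal{P}+(c,d) = \{C_{x+c,y+d} : C_{x,y} \in \mathcal{P}\}$. For positive integers $a,b$ and $T_{a,b} = \{C_{i,1} : 1 \le i \le 2a+1\} \cup \{C_{a+1,j} : 2 \le j \le b+1\}$, its rotations by $90^\circ,180^\circ,270^\circ$ clockwise are $TR_{a,b} = \{C_{b+1,i} : 1 \le i \le 2a+1\} \cup \{C_{j,a+1} : 1 \le j \le b\}$, $TR^2_{a,b} = \{C_{i,b+1} : 1 \le i \le 2a+1\} \cup \{C_{a+1,j} : 1 \le j \le b\}$, $TR^3_{a,b} = \{C_{1,i} : 1 \le i \le 2a+1\} \cup \{C_{j,a+1} : 2 \le j \le b+1\}$. A free copy of $T_{a,b}$ is any shift of one of these four. A set of polyominoes is a valid arrangement if each is contained in $\mathbb{B}$ and they are pairwise disjoint. A free packing of $\mathcal{P}$ is a set of free copies of $\mathcal{P}$ forming a valid arrangement such that adding any further free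 copy of $\mathcal{P}$ yields an invalid arrangement. The clumsy free packing number $\mathrm{cp}_{\mathrm{free}}(\mathcal{P})$ is the minimum number of polyominoes in a free packing of $\mathcal{P}$ on the $n \times n$ board. *)

theory Defs
  imports Main
begin

text \<open>A cell C_{i,j} (column i, row j) is represented by the pair (i, j) of integers.
  A polyomino is a finite set of cells.\<close>

type_synonym cell = "int \<times> int"
type_synonym polyomino = "cell set"

definition board :: "nat \<Rightarrow> polyomino" where
  "board n = {(i, j). 1 \<le> i \<and> i \<le> int n \<and> 1 \<le> j \<and> j \<le> int n}"

definition shift :: "polyomino \<Rightarrow> int \<Rightarrow> int \<Rightarrow> polyomino" where
  "shift P c d = {(x + c, y + d) | x y. (x, y) \<in> P}"

definition T :: "nat \<Rightarrow> nat \<Rightarrow> polyomino" where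
  "T a b = {(i, 1) | i. 1 \<le> i \<and> i \<le> 2 * int a + 1}
         \<union> {(int a + 1, j) | j. 2 \<le> j \<and> j \<le> int b + 1}"

definition TR :: "nat \<Rightarrow> nat \<Rightarrow> polyomino" where
  "TR a b = {(int b + 1, i) | i. 1 \<le> i \<and> i \<le> 2 * int a + 1}
          \<union> {(j, int a + 1) | j. 1 \<le> j \<and> j \<le> int b}"

definition TR2 :: "nat \<Rightarrow> nat \<Rightarrow> polyomino" where
  "TR2 a b = {(i, int b + 1) | i. 1 \<le> i \<and> i \<le> 2 * int a + 1}
           \<union> {(int a + 1, j) | j. 1 \<le> j \<and> j \<le> int b}"

definition TR3 :: "nat \<Rightarrow> nat \<Rightarrow> polyomino" where
  "TR3 a b = {(1, i) | i. 1 \<le> i \<and> i \<le> 2 * int a + 1}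
           \<union> {(j, int a + 1) | j. 2 \<le> j \<and> j \<le> int b + 1}"

text \<open>Free copies of T_{a,b}: shifts of any of the four rotations.\<close>
definition free_copy_T :: "nat \<Rightarrow> nat \<Rightarrow> polyomino \<Rightarrow> bool" where
  "free_copy_T a b Q \<longleftrightarrow>
     (\<exists>R \<in> {T a b, TR a b, TR2 a b, TR3 a b}. \<exists>c d. Q = shift R c d)"

definition valid_arrangement :: "nat \<Rightarrow> polyomino set \<Rightarrow> bool" where
  "valid_arrangement n S \<longleftrightarrow>
     (\<forall>P \<in> S. P \<subseteq> board n) \<and>
     (\<forall>P \<in> S. \<forall>Q \<in> S. P \<noteq> Q \<longrightarrow> P \<inter> Q = {})"

definition free_packing_T :: "nat \<Rightarrow> nat \<Rightarrow> nat \<Rightarrow> polyomino set \<Rightarrow> bool" where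
  "free_packing_T a b n S \<longleftrightarrow>
     (\<forall>P \<in> S. free_copy_T a b P) \<and> valid_arrangement n S \<and>
     (\<forall>Q. free_copy_T a b Q \<and> Q \<notin> S \<longrightarrow> \<not> valid_arrangement n (insert Q S))"

definition cp_free_T :: "nat \<Rightarrow> nat \<Rightarrow> nat" where
  "cp_free_T a b =
     (LEAST k. \<exists>S. free_packing_T a b (card (T a b)) S \<and> card S = k)"

end

theory Submission
  imports Defs
begin

lemma mem_shift: "((x::int), (y::int)) \<in> shift P c d \<longleftrightarrow> (x - c, y - d) \<in> P"
  unfolding shift_def by force

lemma mem_sT: "((x::int), (y::int)) \<in> shift (T a b) c d \<longleftrightarrow>
   (y = d + 1 \<and> c + 1 \<le> x \<and> x \<le> c + 2 * int a + 1) \<or> (x = c + int a + 1 \<and> d + 2 \<le> y \<and> y \<le> d + int b + 1)"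
  unfolding mem_shift T_def by auto

lemma mem_sTR: "((x::int), (y::int)) \<in> shift (TR a b) c d \<longleftrightarrow>
   (x = c + int b + 1 \<and> d + 1 \<le> y \<and> y \<le> d + 2 * int a + 1) \<or> (y = d + int a + 1 \<and> c + 1 \<le> x \<and> x \<le> c + int b)"
  unfolding mem_shift TR_def by auto

lemma mem_sTR2: "((x::int), (y::int)) \<in> shift (TR2 a b) c d \<longleftrightarrow>
   (y = d + int b + 1 \<and> c + 1 \<le> x \<and> x \<le> c + 2 * int a + 1) \<or> (x = c + int a + 1 \<and> d + 1 \<le> y \<and> y \<le> d + int b)"
  unfolding mem_shift TR2_def by auto

lemma mem_sTR3: "((x::int), (y::int)) \<in> shift (TR3 a b) c d \<longleftrightarrow>
   (x = c + 1 \<and> d + 1 \<le> y \<and> y \<le> d + 2 * int a + 1) \<or> (y = d + int a + 1 \<and> c + 2 \<le> x \<and> x \<le> c + int b + 1)"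
  unfolding mem_shift TR3_def by auto

lemmas mems = mem_sT mem_sTR mem_sTR2 mem_sTR3

lemma inb: "P \<subseteq> board n \<Longrightarrow> (x, y) \<in> P \<Longrightarrow> 1 \<le> x \<and> x \<le> int n \<and> 1 \<le> y \<and> y \<le> int n"
  unfolding board_def by auto

lemma sub_board: "(\<And>x y. (x, y) \<in> P \<Longrightarrow> 1 \<le> x \<and> x \<le> int n \<and> 1 \<le> y \<and> y \<le> int n) \<Longrightarrow> P \<subseteq> board n"
  unfolding board_def by auto

lemma disj: "(\<And>x y. (x, y) \<in> P \<Longrightarrow> (x, y) \<in> Q \<Longrightarrow> False) \<Longrightarrow> P \<inter> Q = {}"
  by auto

lemma fc_T: "free_copy_T a b (shift (T a b) c d)" unfolding free_copy_T_def by blast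
lemma fc_TR: "free_copy_T a b (shift (TR a b) c d)" unfolding free_copy_T_def by blast
lemma fc_TR2: "free_copy_T a b (shift (TR2 a b) c d)" unfolding free_copy_T_def by blast
lemma fc_TR3: "free_copy_T a b (shift (TR3 a b) c d)" unfolding free_copy_T_def by blast

lemma card_T: "card (T a a) = 3 * a + 1"
proof -
  have e: "T a a = (\<lambda>i. (i, 1::int)) ` {1..2 * int a + 1} \<union> (\<lambda>j. (int a + 1, j)) ` {2..int a + 1}"
    unfolding T_def by auto
  have "card ((\<lambda>i. (i, 1::int)) ` {1..2 * int a + 1}) = 2 * a + 1"
    by (subst card_image) (auto simp: inj_on_def)
  moreover have "card ((\<lambda>j. (int a + 1, j)) ` {2..int a + 1}) = a"
    by (subst card_image) (auto simp: inj_on_def)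
  moreover have "(\<lambda>i. (i, 1::int)) ` {1..2 * int a + 1} \<inter> (\<lambda>j. (int a + 1, j)) ` {2..int a + 1} = {}"
    by auto
  ultimately show ?thesis unfolding e by (simp add: card_Un_disjoint)
qed

lemma lb_T:
  assumes a: "a \<ge> 1" and P: "shift (T a a) c d \<subseteq> board (3*a+1)"
  shows "\<exists>Q. free_copy_T a a Q \<and> Q \<subseteq> board (3*a+1) \<and> shift (T a a) c d \<inter> Q = {}"
proof -
  have h0: "(c+1, d+1) \<in> shift (T a a) c d" by (simp add: mems)
  have h1: "(c+2*int a+1, d+1) \<in> shift (T a a) c d" by (simp add: mems)
  have h2: "(c+int a+1, d+int a+1) \<in> shift (T a a) c d" using a by (simp add: mems)
  from inb[OF P h0] inb[OF P h1] inb[OF P h2] have c: "0 \<le> c" "0 \<le> d" "c \<le> int a" "d \<le> 2 * int a" by auto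
  consider "d \<ge> int a + 1" | "d \<le> int a - 1" | "d = int a \<and> c \<ge> 1" | "d = int a \<and> c = 0" using c by linarith
  then show ?thesis
  proof cases
    case 1 show ?thesis
      apply (rule exI[of _ "shift (T a a) (0) (0)"])
      using 1 c a by (auto intro!: fc_T sub_board disj simp: mems)
  next
    case 2 show ?thesis
      apply (rule exI[of _ "shift (T a a) (0) (2*int a)"])
      using 2 c a by (auto intro!: fc_T sub_board disj simp: mems)
  next
    case 3 show ?thesis
      apply (rule exI[of _ "shift (TR3 a a) (0) (1)"])
      using 3 c a by (auto intro!: fc_TR3 sub_board disj simp: mems)
  next
    case 4 show ?thesis
      apply (rule exI[of _ "shift (TR a a) (2*int a) (1)"])
      using 4 c a by (auto intro!: fc_TR sub_board disj simp: mems)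
  qed
qed

lemma lb_TR2:
  assumes a: "a \<ge> 1" and P: "shift (TR2 a a) c d \<subseteq> board (3*a+1)"
  shows "\<exists>Q. free_copy_T a a Q \<and> Q \<subseteq> board (3*a+1) \<and> shift (TR2 a a) c d \<inter> Q = {}"
proof -
  have h0: "(c+1, d+int a+1) \<in> shift (TR2 a a) c d" by (simp add: mems)
  have h1: "(c+2*int a+1, d+int a+1) \<in> shift (TR2 a a) c d" by (simp add: mems)
  have h2: "(c+int a+1, d+1) \<in> shift (TR2 a a) c d" using a by (simp add: mems)
  from inb[OF P h0] inb[OF P h1] inb[OF P h2] have c: "0 \<le> c" "0 \<le> d" "c \<le> int a" "d \<le> 2 * int a" by auto
  consider "d \<ge> int a + 1" | "d \<le> int a - 1" | "d = int a \<and> c \<ge> 1" | "d = int a \<and> c = 0" using c by linarith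
  then show ?thesis
  proof cases
    case 1 show ?thesis
      apply (rule exI[of _ "shift (T a a) (0) (0)"])
      using 1 c a by (auto intro!: fc_T sub_board disj simp: mems)
  next
    case 2 show ?thesis
      apply (rule exI[of _ "shift (T a a) (0) (2*int a)"])
      using 2 c a by (auto intro!: fc_T sub_board disj simp: mems)
  next
    case 3 show ?thesis
      apply (rule exI[of _ "shift (TR3 a a) (0) (0)"])
      using 3 c a by (auto intro!: fc_TR3 sub_board disj simp: mems)
  next
    case 4 show ?thesis
      apply (rule exI[of _ "shift (TR a a) (2*int a) (0)"])
      using 4 c a by (auto intro!: fc_TR sub_board disj simp: mems)
  qed
qed

lemma lb_TR:
  assumes a: "a \<ge> 1" and P: "shift (TR a a) c d \<subseteq> board (3*a+1)"
  shows "\<exists>Q. free_copy_T a a Q \<and> Q \<subseteq> board (3*a+1) \<and> shift (TR a a) c d \<inter> Q = {}"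
proof -
  have h0: "(c+int a+1, d+1) \<in> shift (TR a a) c d" by (simp add: mems)
  have h1: "(c+int a+1, d+2*int a+1) \<in> shift (TR a a) c d" by (simp add: mems)
  have h2: "(c+1, d+int a+1) \<in> shift (TR a a) c d" using a by (simp add: mems)
  from inb[OF P h0] inb[OF P h1] inb[OF P h2] have c: "0 \<le> c" "0 \<le> d" "c \<le> 2 * int a" "d \<le> int a" by auto
  consider "c \<ge> int a + 1" | "c \<le> int a - 1" | "c = int a \<and> d \<ge> 1" | "c = int a \<and> d = 0" using c by linarith
  then show ?thesis
  proof cases
    case 1 show ?thesis
      apply (rule exI[of _ "shift (TR3 a a) (0) (0)"])
      using 1 c a by (auto intro!: fc_TR3 sub_board disj simp: mems)
  next
    case 2 show ?thesis
      apply (rule exI[of _ "shift (TR3 a a) (2*int a) (0)"])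
      using 2 c a by (auto intro!: fc_TR3 sub_board disj simp: mems)
  next
    case 3 show ?thesis
      apply (rule exI[of _ "shift (T a a) (0) (0)"])
      using 3 c a by (auto intro!: fc_T sub_board disj simp: mems)
  next
    case 4 show ?thesis
      apply (rule exI[of _ "shift (TR2 a a) (0) (2*int a)"])
      using 4 c a by (auto intro!: fc_TR2 sub_board disj simp: mems)
  qed
qed

lemma lb_TR3:
  assumes a: "a \<ge> 1" and P: "shift (TR3 a a) c d \<subseteq> board (3*a+1)"
  shows "\<exists>Q. free_copy_T a a Q \<and> Q \<subseteq> board (3*a+1) \<and> shift (TR3 a a) c d \<inter> Q = {}"
proof -
  have h0: "(c+1, d+1) \<in> shift (TR3 a a) c d" by (simp add: mems)
  have h1: "(c+1, d+2*int a+1) \<in> shift (TR3 a a) c d" by (simp add: mems)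
  have h2: "(c+int a+1, d+int a+1) \<in> shift (TR3 a a) c d" using a by (simp add: mems)
  from inb[OF P h0] inb[OF P h1] inb[OF P h2] have c: "0 \<le> c" "0 \<le> d" "c \<le> 2 * int a" "d \<le> int a" by auto
  consider "c \<ge> int a + 1" | "c \<le> int a - 1" | "c = int a \<and> d \<ge> 1" | "c = int a \<and> d = 0" using c by linarith
  then show ?thesis
  proof cases
    case 1 show ?thesis
      apply (rule exI[of _ "shift (TR3 a a) (0) (0)"])
      using 1 c a by (auto intro!: fc_TR3 sub_board disj simp: mems)
  next
    case 2 show ?thesis
      apply (rule exI[of _ "shift (TR3 a a) (2*int a) (0)"])
      using 2 c a by (auto intro!: fc_TR3 sub_board disj simp: mems)
  next
    case 3 show ?thesis
      apply (rule exI[of _ "shift (T a a) (1) (0)"])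
      using 3 c a by (auto intro!: fc_T sub_board disj simp: mems)
  next
    case 4 show ?thesis
      apply (rule exI[of _ "shift (TR2 a a) (1) (2*int a)"])
      using 4 c a by (auto intro!: fc_TR2 sub_board disj simp: mems)
  qed
qed

lemma max_T:
  assumes a: "a \<ge> 1" and P: "shift (T a a) c d \<subseteq> board (3*a+1)"
    and D1: "shift (T a a) c d \<inter> shift (T a a) 0 (int a - 1) = {}" and D2: "shift (T a a) c d \<inter> shift (T a a) (int a) (2 * int a) = {}"
  shows False
proof -
  have h0: "(c+1, d+1) \<in> shift (T a a) c d" using a by (simp add: mems)
  have h1: "(c+2*int a+1, d+1) \<in> shift (T a a) c d" using a by (simp add: mems)
  have h2: "(c+int a+1, d+int a+1) \<in> shift (T a a) c d" using a by (simp add: mems)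
  from inb[OF P h0] inb[OF P h1] inb[OF P h2] have c: "0 \<le> c" "0 \<le> d" "c \<le> int a" "d \<le> 2 * int a" by auto
  consider "d \<le> int a - 1" | "d \<ge> int a" using c by linarith
  then show False
  proof cases
    case 1
    have "(c+int a+1, int a) \<in> shift (T a a) c d" "(c+int a+1, int a) \<in> shift (T a a) 0 (int a - 1)" using a c 1 by (auto simp: mems)
    then show False using D1 D2 by blast
  next
    case 2
    have "(c+int a+1, 2*int a+1) \<in> shift (T a a) c d" "(c+int a+1, 2*int a+1) \<in> shift (T a a) (int a) (2 * int a)" using a c 2 by (auto simp: mems)
    then show False using D1 D2 by blast
  qed
qed

lemma max_TR:
  assumes a: "a \<ge> 1" and P: "shift (TR a a) c d \<subseteq> board (3*a+1)"
    and D1: "shift (TR a a) c d \<inter> shift (T a a) 0 (int a - 1) = {}" and D2: "shift (TR a a) c d \<inter> shift (T a a) (int a) (2 * int a) = {}"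
  shows False
proof -
  have h0: "(c+int a+1, d+1) \<in> shift (TR a a) c d" using a by (simp add: mems)
  have h1: "(c+int a+1, d+2*int a+1) \<in> shift (TR a a) c d" using a by (simp add: mems)
  have h2: "(c+1, d+int a+1) \<in> shift (TR a a) c d" using a by (simp add: mems)
  from inb[OF P h0] inb[OF P h1] inb[OF P h2] have c: "0 \<le> c" "0 \<le> d" "c \<le> 2 * int a" "d \<le> int a" by auto
  have "(c+int a+1, 2*int a+1) \<in> shift (TR a a) c d" "(c+int a+1, 2*int a+1) \<in> shift (T a a) (int a) (2 * int a)" using a c by (auto simp: mems)
  then show False using D1 D2 by blast
qed

lemma max_TR2:
  assumes a: "a \<ge> 1" and P: "shift (TR2 a a) c d \<subseteq> board (3*a+1)"
    and D1: "shift (TR2 a a) c d \<inter> shift (T a a) 0 (int a - 1) = {}" and D2: "shift (TR2 a a) c d \<inter> shift (T a a) (int a) (2 * int a) = {}"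
  shows False
proof -
  have h0: "(c+1, d+int a+1) \<in> shift (TR2 a a) c d" using a by (simp add: mems)
  have h1: "(c+2*int a+1, d+int a+1) \<in> shift (TR2 a a) c d" using a by (simp add: mems)
  have h2: "(c+int a+1, d+1) \<in> shift (TR2 a a) c d" using a by (simp add: mems)
  from inb[OF P h0] inb[OF P h1] inb[OF P h2] have c: "0 \<le> c" "0 \<le> d" "c \<le> int a" "d \<le> 2 * int a" by auto
  consider "d \<le> int a - 1" | "d \<ge> int a" using c by linarith
  then show False
  proof cases
    case 1
    have "(c+int a+1, int a) \<in> shift (TR2 a a) c d" "(c+int a+1, int a) \<in> shift (T a a) 0 (int a - 1)" using a c 1 by (auto simp: mems)
    then show False using D1 D2 by blast
  next
    case 2
    have "(c+int a+1, 2*int a+1) \<in> shift (TR2 a a) c d" "(c+int a+1, 2*int a+1) \<in> shift (T a a) (int a) (2 * int a)" using a c 2 by (auto simp: mems)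
    then show False using D1 D2 by blast
  qed
qed

lemma max_TR3:
  assumes a: "a \<ge> 1" and P: "shift (TR3 a a) c d \<subseteq> board (3*a+1)"
    and D1: "shift (TR3 a a) c d \<inter> shift (T a a) 0 (int a - 1) = {}" and D2: "shift (TR3 a a) c d \<inter> shift (T a a) (int a) (2 * int a) = {}"
  shows False
proof -
  have h0: "(c+1, d+1) \<in> shift (TR3 a a) c d" using a by (simp add: mems)
  have h1: "(c+1, d+2*int a+1) \<in> shift (TR3 a a) c d" using a by (simp add: mems)
  have h2: "(c+int a+1, d+int a+1) \<in> shift (TR3 a a) c d" using a by (simp add: mems)
  from inb[OF P h0] inb[OF P h1] inb[OF P h2] have c: "0 \<le> c" "0 \<le> d" "c \<le> 2 * int a" "d \<le> int a" by auto
  consider "c \<ge> int a" | "c \<le> int a - 1 \<and> d \<le> int a - 1" | "c \<le> int a - 1 \<and> d \<ge> int a" using c by linarith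
  then show False
  proof cases
    case 1
    have "(c+1, 2*int a+1) \<in> shift (TR3 a a) c d" "(c+1, 2*int a+1) \<in> shift (T a a) (int a) (2 * int a)" using a c 1 by (auto simp: mems)
    then show False using D1 D2 by blast
  next
    case 2
    have "(c+1, int a) \<in> shift (TR3 a a) c d" "(c+1, int a) \<in> shift (T a a) 0 (int a - 1)" using a c 2 by (auto simp: mems)
    then show False using D1 D2 by blast
  next
    case 3
    have "(int a+1, 2*int a+1) \<in> shift (TR3 a a) c d" "(int a+1, 2*int a+1) \<in> shift (T a a) (int a) (2 * int a)" using a c 3 by (auto simp: mems)
    then show False using D1 D2 by blast
  qed
qed

lemma fc_ne: "free_copy_T a b P \<Longrightarrow> P \<noteq> {}"
proof -
  assume "free_copy_T a b P"
  then obtain R c d where R: "R \<in> {T a b, TR a b, TR2 a b, TR3 a b}" and P: "P = shift R c d"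
    unfolding free_copy_T_def by blast
  from R show ?thesis unfolding P
  proof (elim insertE emptyE)
    assume "R = T a b" then have "(c+1, d+1) \<in> shift R c d" by (simp add: mems) then show "shift R c d \<noteq> {}" by blast
  next
    assume "R = TR a b" then have "(c+int b+1, d+1) \<in> shift R c d" by (simp add: mems) then show "shift R c d \<noteq> {}" by blast
  next
    assume "R = TR2 a b" then have "(c+1, d+int b+1) \<in> shift R c d" by (simp add: mems) then show "shift R c d \<noteq> {}" by blast
  next
    assume "R = TR3 a b" then have "(c+1, d+1) \<in> shift R c d" by (simp add: mems) then show "shift R c d \<noteq> {}" by blast
  qed
qed

lemma lb:
  assumes a: "a \<ge> 1" and fc: "free_copy_T a a P" and P: "P \<subseteq> board (3*a+1)"
  shows "\<exists>Q. free_copy_T a a Q \<and> Q \<subseteq> board (3*a+1) \<and> P \<inter> Q = {}"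
proof -
  from fc obtain R c d where R: "R \<in> {T a a, TR a a, TR2 a a, TR3 a a}" and e: "P = shift R c d"
    unfolding free_copy_T_def by blast
  from R show ?thesis
  proof (elim insertE emptyE)
    assume "R = T a a" then show ?thesis using lb_T[OF a, of c d] P e by simp
  next
    assume "R = TR a a" then show ?thesis using lb_TR[OF a, of c d] P e by simp
  next
    assume "R = TR2 a a" then show ?thesis using lb_TR2[OF a, of c d] P e by simp
  next
    assume "R = TR3 a a" then show ?thesis using lb_TR3[OF a, of c d] P e by simp
  qed
qed

lemma maxi:
  assumes a: "a \<ge> 1" and fc: "free_copy_T a a Q" and Q: "Q \<subseteq> board (3*a+1)"
    and D1: "Q \<inter> shift (T a a) 0 (int a - 1) = {}" and D2: "Q \<inter> shift (T a a) (int a) (2 * int a) = {}"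
  shows False
proof -
  from fc obtain R c d where R: "R \<in> {T a a, TR a a, TR2 a a, TR3 a a}" and e: "Q = shift R c d"
    unfolding free_copy_T_def by blast
  from R show ?thesis
  proof (elim insertE emptyE)
    assume "R = T a a" then show ?thesis using max_T[OF a, of c d] Q D1 D2 e by simp
  next
    assume "R = TR a a" then show ?thesis using max_TR[OF a, of c d] Q D1 D2 e by simp
  next
    assume "R = TR2 a a" then show ?thesis using max_TR2[OF a, of c d] Q D1 D2 e by simp
  next
    assume "R = TR3 a a" then show ?thesis using max_TR3[OF a, of c d] Q D1 D2 e by simp
  qed
qed

lemma finite_board: "finite (board n)"
proof -
  have "board n \<subseteq> {1..int n} \<times> {1..int n}" unfolding board_def by auto
  then show ?thesis by (rule finite_subset) simp
qed

theorem theorem8: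
  fixes a :: nat
  assumes "a \<ge> 1"
  shows "card (T a a) = 3 * a + 1 \<and> cp_free_T a a = 2"
proof -
  note a = assms
  define P1 where "P1 = shift (T a a) 0 (int a - 1)"
  define P2 where "P2 = shift (T a a) (int a) (2 * int a)"
  have P1b: "P1 \<subseteq> board (3*a+1)" unfolding P1_def
    by (rule sub_board) (use a in \<open>auto simp: mems\<close>)
  have P2b: "P2 \<subseteq> board (3*a+1)" unfolding P2_def
    by (rule sub_board) (use a in \<open>auto simp: mems\<close>)
  have P12: "P1 \<inter> P2 = {}" unfolding P1_def P2_def
    by (rule disj) (use a in \<open>auto simp: mems\<close>)
  have ne1: "P1 \<noteq> {}" unfolding P1_def by (rule fc_ne[OF fc_T])
  have neq: "P1 \<noteq> P2" using P12 ne1 by blast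
  have pack: "free_packing_T a a (3*a+1) {P1, P2}"
    unfolding free_packing_T_def
  proof (intro conjI allI impI)
    show "\<forall>P\<in>{P1, P2}. free_copy_T a a P" unfolding P1_def P2_def by (auto intro: fc_T)
    show "valid_arrangement (3 * a + 1) {P1, P2}"
      unfolding valid_arrangement_def using P1b P2b P12 by auto
  next
    fix Q assume h: "free_copy_T a a Q \<and> Q \<notin> {P1, P2}"
    show "\<not> valid_arrangement (3 * a + 1) (insert Q {P1, P2})"
    proof
      assume v: "valid_arrangement (3 * a + 1) (insert Q {P1, P2})"
      then have "Q \<subseteq> board (3*a+1)" "Q \<inter> P1 = {}" "Q \<inter> P2 = {}"
        using h unfolding valid_arrangement_def by auto
      then show False using maxi[OF a, of Q] h unfolding P1_def P2_def by blast
    qed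
  qed
  have lower: "2 \<le> card S" if S: "free_packing_T a a (3*a+1) S" for S
  proof (rule ccontr)
    assume "\<not> 2 \<le> card S"
    then have "card S = 0 \<or> card S = 1" by linarith
    have sub: "S \<subseteq> Pow (board (3*a+1))" using S unfolding free_packing_T_def valid_arrangement_def by auto
    have fin: "finite S" by (rule finite_subset[OF sub]) (simp add: finite_board)
    show False
    proof (cases "card S = 0")
      case True
      then have "S = {}" using fin by simp
      have tb: "shift (T a a) 0 0 \<subseteq> board (3*a+1)"
        by (rule sub_board) (use a in \<open>auto simp: mems\<close>)
      have "valid_arrangement (3*a+1) (insert (shift (T a a) 0 0) S)"
        unfolding valid_arrangement_def \<open>S = {}\<close> using tb by auto
      then show False using S fc_T[of a a 0 0] unfolding free_packing_T_def \<open>S = {}\<close> by blast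
    next
      case False
      then have "card S = 1" using \<open>card S = 0 \<or> card S = 1\<close> by simp
      then obtain P where SP: "S = {P}" by (auto simp: card_Suc_eq)
      have fcP: "free_copy_T a a P" and Pb: "P \<subseteq> board (3*a+1)"
        using S unfolding SP free_packing_T_def valid_arrangement_def by auto
      obtain Q where Q: "free_copy_T a a Q" "Q \<subseteq> board (3*a+1)" "P \<inter> Q = {}"
        using lb[OF a fcP Pb] by blast
      have "Q \<noteq> P" using Q(3) fc_ne[OF fcP] by blast
      moreover have "valid_arrangement (3*a+1) (insert Q S)"
        unfolding valid_arrangement_def SP using Q Pb by auto
      ultimately show False using S Q(1) unfolding free_packing_T_def SP by blast
    qed
  qed
  have "cp_free_T a a = 2"
    unfolding cp_free_T_def card_T
  proof (rule Least_equality)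
    show "\<exists>S. free_packing_T a a (3 * a + 1) S \<and> card S = 2"
      using pack neq by (intro exI[of _ "{P1, P2}"]) auto
  next
    fix k assume "\<exists>S. free_packing_T a a (3 * a + 1) S \<and> card S = k"
    then show "2 \<le> k" using lower by blast
  qed
  then show ?thesis using card_T by simp
qed

end
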